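(* Let $F$ be a finite field, let $f,g,q\in F[\lambda]$ with $f,g$ relatively prime and $q=\sum_{i=0}^m q_i\lambda^i$ monic and irreducible of degree $m$, and let $Q(\lambda)=\mathfrak p_q(g,f):=\sum_{i=0}^m q_i\,f(\lambda)^i g(\lambda)^{m-i}$. Assume $Q\neq 0$. Let $L$ be the splitting field of $q$ over $F$ and $\alpha\in L$ a root of $q$. Then the number of distinct monic irreducible factors of $Q$ in $F[\lambda]$ equals the number of distinct monic irreducible factors of $f(\lambda)-\alpha g(\lambda)$ in $L[\lambda]$.
   Context: $\mathfrak p_q(g,f)=g^{\deg q}\,q(f/g)$ is the homogenization of $q$ evaluated at $(g,f)$. A polynomial $\mathfrak p_q(g,f)$ with $f,g$ coprime and $q$ monic irreducible is called a candidate. *)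

theory Defs
  imports "HOL-Computational_Algebra.Computational_Algebra"
begin

definition homog_eval :: "'a::comm_ring_1 poly \<Rightarrow> 'a poly \<Rightarrow> 'a poly \<Rightarrow> 'a poly" where
  "homog_eval q g f = (\<Sum>i\<le>degree q. smult (coeff q i) (f ^ i * g ^ (degree q - i)))"

definition is_field_hom :: "('a::field \<Rightarrow> 'b::field) \<Rightarrow> bool" where
  "is_field_hom h \<longleftrightarrow> h 0 = 0 \<and> h 1 = 1 \<and>
     (\<forall>x y. h (x + y) = h x + h y) \<and> (\<forall>x y. h (x * y) = h x * h y)"

definition is_subfield :: "'b::field set \<Rightarrow> bool" where
  "is_subfield K \<longleftrightarrow> 0 \<in> K \<and> 1 \<in> K \<and>
     (\<forall>x\<in>K. \<forall>y\<in>K. x + y \<in> K \<and> x * y \<in> K) \<and>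
     (\<forall>x\<in>K. - x \<in> K \<and> inverse x \<in> K)"

definition is_splitting_field :: "('a::field \<Rightarrow> 'b::field) \<Rightarrow> 'a poly \<Rightarrow> bool" where
  "is_splitting_field h q \<longleftrightarrow> is_field_hom h \<and>
     (\<exists>c rs. map_poly h q = smult c (\<Prod>r\<leftarrow>rs. [:- r, 1:])) \<and>
     (\<forall>K. is_subfield K \<and> range h \<subseteq> K \<and> {x. poly (map_poly h q) x = 0} \<subseteq> K \<longrightarrow> K = UNIV)"

definition num_monic_irred_factors :: "'a::field poly \<Rightarrow> nat" where
  "num_monic_irred_factors p = card {d. lead_coeff d = 1 \<and> irreducible d \<and> d dvd p}"

end

theory Submission
  imports Defs "Berlekamp_Zassenhaus.Finite_Field"
begin


hide_const (open) UnivPoly.coeff UnivPoly.monom module.smult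

lemma ff_fermat:
  fixes a :: "'a::{field,finite}"
  assumes "a \<noteq> 0"
  shows "a ^ (CARD('a) - 1) = 1"
proof -
  let ?U = "UNIV - {0::'a}"
  have inj: "inj_on (\<lambda>x. a * x) ?U" using assms by (auto intro!: inj_onI)
  have img: "(\<lambda>x. a * x) ` ?U = ?U"
  proof
    show "(\<lambda>x. a * x) ` ?U \<subseteq> ?U" using assms by auto
    show "?U \<subseteq> (\<lambda>x. a * x) ` ?U"
    proof
      fix y assume "y \<in> ?U"
      then have "y = a * (y / a)" "y / a \<in> ?U" using assms by auto
      then show "y \<in> (\<lambda>x. a * x) ` ?U" by blast
    qed
  qed
  have "prod (\<lambda>x. x) ?U = prod (\<lambda>x. a * x) ?U"
    using prod.reindex[OF inj, of "\<lambda>x. x"] img by simp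
  also have "\<dots> = a ^ card ?U * prod (\<lambda>x. x) ?U"
    by (simp add: prod.distrib)
  finally have "a ^ card ?U * prod (\<lambda>x. x) ?U = 1 * prod (\<lambda>x. x) ?U" by simp
  moreover have "prod (\<lambda>x. x) ?U \<noteq> 0" by (simp add: prod_zero_iff)
  ultimately have "a ^ card ?U = 1" by simp
  moreover have "card ?U = CARD('a) - 1" by (simp add: card_Diff_subset)
  ultimately show ?thesis by simp
qed

lemma ff_fermat': "(a::'a::{field,finite}) ^ CARD('a) = a"
proof (cases "a = 0")
  case True then show ?thesis by (simp add: power_0_left)
next
  case False
  have "CARD('a) = Suc (CARD('a) - 1)"
    using finite_UNIV_card_ge_0[where 'a='a] by simp
  then have "a ^ CARD('a) = a * a ^ (CARD('a) - 1)" by (metis power_Suc)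
  then show ?thesis using ff_fermat[OF False] by simp
qed

lemma ff_char_prime: "prime CHAR('a::{field,finite})"
  using finite_imp_CHAR_pos[where 'a='a] prime_CHAR_semidom[where 'a='a] by simp

definition span0 :: "'a::field set \<Rightarrow> 'a set" where
  "span0 S = {y. \<exists>c. y = (\<Sum>s\<in>S. of_nat (c s) * s)}"

lemma span0_add: "y \<in> span0 S \<Longrightarrow> z \<in> span0 S \<Longrightarrow> y + z \<in> span0 S"
proof -
  assume "y \<in> span0 S" "z \<in> span0 S"
  then obtain c d where "y = (\<Sum>s\<in>S. of_nat (c s) * s)" "z = (\<Sum>s\<in>S. of_nat (d s) * s)"
    unfolding span0_def by auto
  then have eq: "y + z = (\<Sum>s\<in>S. of_nat (c s + d s) * s)" by (simp add: sum.distrib algebra_simps)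
  show ?thesis unfolding span0_def mem_Collect_eq by (rule exI[of _ "\<lambda>s. c s + d s"]) (simp add: eq)
qed

lemma span0_nat: "y \<in> span0 S \<Longrightarrow> of_nat e * y \<in> span0 S"
proof -
  assume "y \<in> span0 S"
  then obtain c where "y = (\<Sum>s\<in>S. of_nat (c s) * s)"
    unfolding span0_def by auto
  then have eq: "of_nat e * y = (\<Sum>s\<in>S. of_nat (e * c s) * s)" by (simp add: sum_distrib_left algebra_simps)
  show ?thesis unfolding span0_def mem_Collect_eq by (rule exI[of _ "\<lambda>s. e * c s"]) (simp add: eq)
qed

lemma span0_zero: "0 \<in> span0 S"
  unfolding span0_def by (auto intro!: exI[of _ "\<lambda>s. 0"])

lemma of_nat_char_minus1: "of_nat (CHAR('a::{field,finite}) - 1) = (-1 :: 'a)"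
proof -
  have "CHAR('a) > 0" using ff_char_prime[where 'a='a] prime_gt_0_nat by blast
  then have "of_nat (CHAR('a) - 1) + 1 = (of_nat CHAR('a) :: 'a)"
    by (metis Suc_diff_1 of_nat_Suc add.commute)
  then show ?thesis by (simp add: eq_neg_iff_add_eq_0)
qed

lemma span0_diff: "y \<in> span0 (S::'a::{field,finite} set) \<Longrightarrow> z \<in> span0 S \<Longrightarrow> y - z \<in> span0 S"
  using span0_add[OF _ span0_nat[of z S "CHAR('a) - 1"], of y] of_nat_char_minus1[where 'a='a]
  by simp

lemma span0_insert:
  fixes S :: "'a::{field,finite} set"
  assumes "x \<notin> S"
  shows "span0 (insert x S) = (\<lambda>(c,y). of_nat c * x + y) ` ({..<CHAR('a)} \<times> span0 S)"
proof
  have finS: "finite S" by simp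
  show "span0 (insert x S) \<subseteq> (\<lambda>(c,y). of_nat c * x + y) ` ({..<CHAR('a)} \<times> span0 S)"
  proof
    fix z assume "z \<in> span0 (insert x S)"
    then obtain c where z: "z = (\<Sum>s\<in>insert x S. of_nat (c s) * s)" unfolding span0_def by auto
    have "z = of_nat (c x) * x + (\<Sum>s\<in>S. of_nat (c s) * s)"
      using z assms by (simp add: sum.insert)
    also have "(of_nat (c x) :: 'a) = of_nat (c x mod CHAR('a))"
      by (simp add: of_nat_eq_iff_cong_CHAR cong_def)
    finally have "z = of_nat (c x mod CHAR('a)) * x + (\<Sum>s\<in>S. of_nat (c s) * s)" .
    moreover have "c x mod CHAR('a) < CHAR('a)"
      using ff_char_prime[where 'a='a] prime_gt_0_nat by auto
    moreover have "(\<Sum>s\<in>S. of_nat (c s) * s) \<in> span0 S" unfolding span0_def by auto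
    ultimately show "z \<in> (\<lambda>(c,y). of_nat c * x + y) ` ({..<CHAR('a)} \<times> span0 S)"
      by (intro image_eqI[of _ _ "(c x mod CHAR('a), \<Sum>s\<in>S. of_nat (c s) * s)"]) auto
  qed
  show "(\<lambda>(c,y). of_nat c * x + y) ` ({..<CHAR('a)} \<times> span0 S) \<subseteq> span0 (insert x S)"
  proof clarify
    fix c y assume "y \<in> span0 S"
    then obtain d where y: "y = (\<Sum>s\<in>S. of_nat (d s) * s)" unfolding span0_def by auto
    have "of_nat c * x + y = (\<Sum>s\<in>insert x S. of_nat ((d(x := c)) s) * s)"
      using assms y by (auto simp: sum.insert intro!: sum.cong)
    then show "of_nat c * x + y \<in> span0 (insert x S)" unfolding span0_def by blast
  qed
qed

lemma span0_card: "finite S \<Longrightarrow> \<exists>k. card (span0 (S::'a::{field,finite} set)) = CHAR('a) ^ k"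
proof (induction S rule: finite_induct)
  case empty
  have "span0 ({}::'a set) = {0}" unfolding span0_def by auto
  then show ?case by (auto intro!: exI[of _ 0])
next
  case (insert x S)
  then obtain k where k: "card (span0 S) = CHAR('a) ^ k" by auto
  let ?p = "CHAR('a)"
  have p: "prime ?p" by (rule ff_char_prime)
  show ?case
  proof (cases "x \<in> span0 S")
    case True
    have "span0 (insert x S) = span0 S"
    proof
      show "span0 S \<subseteq> span0 (insert x S)"
      proof
        fix y assume "y \<in> span0 S"
        moreover have "(0::nat) \<in> {..<?p}" using p prime_gt_0_nat by auto
        ultimately show "y \<in> span0 (insert x S)"
          unfolding span0_insert[OF insert(2)]
          by (intro image_eqI[of _ _ "(0, y)"]) auto
      qed
      show "span0 (insert x S) \<subseteq> span0 S"
        unfolding span0_insert[OF insert(2)] using True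
        by (auto intro!: span0_add span0_nat)
    qed
    then show ?thesis using k by auto
  next
    case False
    have inj: "inj_on (\<lambda>(c,y). of_nat c * x + y) ({..<?p} \<times> span0 S)"
    proof (rule inj_onI)
      fix P1 P2 assume P1: "P1 \<in> {..<?p} \<times> span0 S" and P2: "P2 \<in> {..<?p} \<times> span0 S"
        and eqP: "(\<lambda>(c,y). of_nat c * x + y) P1 = (\<lambda>(c,y). of_nat c * x + (y::'a)) P2"
      obtain c y where cy: "P1 = (c, y)" by fastforce
      obtain c' y' where cy': "P2 = (c', y')" by fastforce
      have c: "c \<in> {..<?p}" and y: "y \<in> span0 S" using P1 cy by auto
      have c': "c' \<in> {..<?p}" and y': "y' \<in> span0 S" using P2 cy' by auto
      have eq: "of_nat c * x + y = of_nat c' * x + (y'::'a)" using eqP cy cy' by simp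
      have main: "c = c'" if "c \<in> {..<?p}" "y \<in> span0 S" "c' \<in> {..<?p}" "y' \<in> span0 S"
        and "of_nat c * x + y = of_nat c' * x + (y'::'a)" and "c' \<le> c" for c y c' y'
      proof (rule ccontr)
        assume "c \<noteq> c'"
        with that have lt: "c' < c" by auto
        define d where "d = c - c'"
        have d0: "0 < d" "d < ?p" using lt that by (auto simp: d_def)
        have "of_nat d * x = y' - y"
          using that(5) lt by (simp add: d_def of_nat_diff algebra_simps)
        then have mem: "of_nat d * x \<in> span0 S" using that by (simp add: span0_diff)
        have "(of_nat d :: 'a) \<noteq> 0"
          using d0 by (auto simp: of_nat_eq_0_iff_char_dvd dest: dvd_imp_le)
        then have "(of_nat d :: 'a) ^ (CARD('a) - 1) = 1" by (rule ff_fermat)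
        moreover have "CARD('a) - 1 = Suc (CARD('a) - 2)"
        proof -
          have "CARD('a) \<ge> 2"
          proof -
            have "{0::'a, 1} \<subseteq> UNIV" by auto
            then have "card {0::'a, 1} \<le> CARD('a)" by (intro card_mono) simp_all
            then show ?thesis by simp
          qed
          then show ?thesis by simp
        qed
        ultimately have "of_nat (d ^ (CARD('a) - 2)) * (of_nat d :: 'a) = 1"
          by (simp add: mult.commute)
        then have "x = of_nat (d ^ (CARD('a) - 2)) * (of_nat d * x)"
          by (metis mult.assoc mult_1)
        then have "x \<in> span0 S" using mem span0_nat by metis
        with False show False by simp
      qed
      show "P1 = P2"
      proof -
        have "c = c'"
        proof (cases "c' \<le> c")
          case True then show ?thesis using main[OF c y c' y' eq] by simp
        next
          case False then show ?thesis using main[OF c' y' c y eq[symmetric]] by simp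
        qed
        then show ?thesis using eq cy cy' by simp
      qed
    qed
    have "card (span0 (insert x S)) = card ({..<?p} \<times> span0 S)"
      unfolding span0_insert[OF insert(2)] by (rule card_image[OF inj])
    also have "\<dots> = ?p * ?p ^ k" by (simp add: card_cartesian_product k)
    finally show ?thesis by (auto intro!: exI[of _ "Suc k"])
  qed
qed

lemma ff_card_char_power: "\<exists>k. CARD('a::{field,finite}) = CHAR('a) ^ k"
proof -
  have "span0 (UNIV::'a set) = UNIV"
  proof -
    {fix t :: 'a
    have "(\<Sum>s\<in>UNIV. of_nat (if s = t then 1 else 0) * s) = (\<Sum>s\<in>UNIV. if s = t then s else (0::'a))"
      by (intro sum.cong) auto
    also have "\<dots> = t" by simp
    finally have "t = (\<Sum>s\<in>UNIV. of_nat (if s = t then 1 else 0) * s)" by simp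
    then have "t \<in> span0 UNIV" unfolding span0_def mem_Collect_eq
      by (intro exI[of _ "\<lambda>s. if s = t then 1 else 0"])}
    then show ?thesis by auto
  qed
  then show ?thesis using span0_card[of "UNIV::'a set"] by simp
qed



locale FF =
  fixes h :: "'a::{field,finite} \<Rightarrow> 'b::field"
  assumes fh: "is_field_hom h"
begin

sublocale hh: field_hom h
  using fh unfolding is_field_hom_def by unfold_locales auto

sublocale mh: map_poly_inj_idom_divide_hom h ..

lemma h_inj: "inj h" using hh.injectivity by (auto intro: injI)

lemma h_of_nat: "h (of_nat n) = of_nat n"
  by (induction n) (auto simp: hh.hom_add)

lemma CHAR_b: "CHAR('b) = CHAR('a)"
proof (rule CHAR_eqI)
  show "of_nat CHAR('a) = (0::'b)" by (metis h_of_nat of_nat_CHAR hh.hom_zero)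
  fix x assume "of_nat x = (0::'b)"
  then have "h (of_nat x) = h 0" by (simp add: h_of_nat)
  then have "of_nat x = (0::'a)" using hh.injectivity by blast
  then show "CHAR('a) dvd x" by (simp add: of_nat_eq_0_iff_char_dvd)
qed

definition N :: nat where "N = CARD('a)"

definition fr :: "nat \<Rightarrow> 'b \<Rightarrow> 'b" where "fr j x = x ^ (N ^ j)"

lemma N_ge2: "N \<ge> 2"
proof -
  have "{0::'a, 1} \<subseteq> UNIV" by auto
  then have "card {0::'a, 1} \<le> CARD('a)" by (intro card_mono) simp_all
  then show ?thesis by (simp add: N_def)
qed

lemma fr_add: "fr j (x + y) = fr j x + fr j y"
proof -
  obtain k where k: "CARD('a) = CHAR('a) ^ k" using ff_card_char_power by blast
  have "N ^ j = CHAR('b) ^ (k * j)" by (simp add: N_def k CHAR_b power_mult)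
  moreover have "prime CHAR('b)" using CHAR_b ff_char_prime[where 'a='a] by simp
  ultimately show ?thesis unfolding fr_def by (intro freshmans_dream') auto
qed

lemma fr_mult: "fr j (x * y) = fr j x * fr j y"
  unfolding fr_def by (simp add: power_mult_distrib)

lemma fr_one: "fr j 1 = 1" unfolding fr_def by simp

lemma fr_zero: "fr j 0 = 0"
proof -
  have "0 < N ^ j" using N_ge2 by simp
  then show ?thesis unfolding fr_def by (rule zero_power)
qed

sublocale frh: field_hom "fr j"
  by unfold_locales (auto simp: fr_add fr_mult fr_one fr_zero)

sublocale mfr: map_poly_inj_idom_divide_hom "fr j" ..

lemma fr_comp: "fr i (fr j x) = fr (i + j) x"
proof -
  have "fr i (fr j x) = x ^ (N ^ j * N ^ i)" unfolding fr_def by (simp add: power_mult)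
  also have "N ^ j * N ^ i = N ^ (i + j)" by (simp add: power_add mult.commute)
  finally show ?thesis unfolding fr_def .
qed

lemma fr_0: "fr 0 x = x" unfolding fr_def by simp

lemma fr_h: "fr j (h a) = h a"
proof -
  have "h a ^ N = h a" unfolding N_def by (metis hh.hom_power ff_fermat')
  then show ?thesis
    by (induction j) (auto simp: fr_def power_mult)
qed

lemma fr_inj: "fr j x = fr j y \<Longrightarrow> x = y"
  using frh.injectivity by blast

lemma fixed_range: "{x. fr 1 x = x} = range h"
proof -
  define P :: "'b poly" where "P = Polynomial.monom 1 N - [:0, 1:]"
  have polyP: "poly P x = x ^ N - x" for x by (simp add: P_def poly_monom)
  have "coeff [:0, 1:] N = (0::'b)" using N_ge2 by (intro coeff_eq_0) simp
  then have "coeff P N = 1" by (simp add: P_def coeff_monom)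
  then have P0: "P \<noteq> 0" by auto
  have set: "{x. fr 1 x = x} = {x. poly P x = 0}" by (auto simp: polyP fr_def)
  have "degree P \<le> N"
    unfolding P_def by (rule order.trans[OF degree_diff_le_max]) (use N_ge2 in \<open>auto simp: degree_monom_eq\<close>)
  then have c1: "card {x. fr 1 x = x} \<le> N" using card_poly_roots_bound[OF P0] set by simp
  have fin: "finite {x. fr 1 x = x}" using poly_roots_finite[OF P0] set by simp
  have sub: "range h \<subseteq> {x. fr 1 x = x}" using fr_h by auto
  have "card (range h) = N" using h_inj by (simp add: card_image N_def)
  then have "card (range h) = card {x. fr 1 x = x}"
    using c1 card_mono[OF fin sub] by simp
  then show ?thesis using card_subset_eq[OF fin sub] by simp
qed

lemma fixed_poly:
  assumes "map_poly (fr 1) P = P"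
  shows "\<exists>P0. P = map_poly h P0"
proof -
  have c: "coeff P i \<in> range h" for i
  proof -
    have "fr 1 (coeff P i) = coeff P i"
      using arg_cong[OF assms, of "\<lambda>p. coeff p i"] by (simp add: coeff_map_poly fr_zero)
    then show ?thesis using fixed_range by auto
  qed
  have i0: "inv_into UNIV h 0 = 0" using h_inj by (metis hh.hom_zero inv_f_f)
  have "map_poly h (map_poly (inv_into UNIV h) P) = map_poly (h \<circ> inv_into UNIV h) P"
    by (rule map_poly_map_poly) (auto simp: i0)
  also have "\<dots> = P"
  proof (rule map_poly_idI)
    fix x assume "x \<in> set (coeffs P)"
    then have "x \<in> range h" using c by (auto simp: coeffs_def split: if_splits)
    then show "(h \<circ> inv_into UNIV h) x = x" by (auto simp: f_inv_into_f)
  qed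
  finally show ?thesis by metis
qed

end


lemma bezout_poly:
  fixes a b :: "'x::field poly"
  shows "\<exists>x y. (x * a + y * b) dvd a \<and> (x * a + y * b) dvd b"
proof (cases "a = 0 \<and> b = 0")
  case True
  then show ?thesis by (auto intro!: exI[of _ 0])
next
  case False
  define P where "P = (\<lambda>n. \<exists>x y. x * a + y * b \<noteq> 0 \<and> degree (x * a + y * b) = n)"
  have "\<exists>n. P n"
  proof (cases "a = 0")
    case True
    then have "b \<noteq> 0" using False by simp
    then show ?thesis unfolding P_def by (intro exI[of _ "degree b"] exI[of _ 0] exI[of _ 1]) simp
  next
    case False
    then show ?thesis unfolding P_def by (intro exI[of _ "degree a"] exI[of _ 1] exI[of _ 0]) simp
  qed
  then have "P (LEAST n. P n)" by (rule LeastI_ex)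
  then obtain x y where d0: "x * a + y * b \<noteq> 0" and dl: "degree (x * a + y * b) = (LEAST n. P n)"
    unfolding P_def by blast
  define d where "d = x * a + y * b"
  have least: "\<not> (x' * a + y' * b \<noteq> 0 \<and> degree (x' * a + y' * b) < degree d)" for x' y'
  proof
    assume *: "x' * a + y' * b \<noteq> 0 \<and> degree (x' * a + y' * b) < degree d"
    then have "P (degree (x' * a + y' * b))" unfolding P_def by blast
    then have "(LEAST n. P n) \<le> degree (x' * a + y' * b)" by (rule Least_le)
    with * dl show False by (simp add: d_def)
  qed
  have "d dvd a"
  proof -
    have "a mod d = (1 - (a div d) * x) * a + (- ((a div d) * y)) * b"
      using div_mult_mod_eq[of a d] unfolding d_def by (simp add: algebra_simps)
    then have "a mod d = 0" using least[of "1 - (a div d) * x" "- ((a div d) * y)"]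
      degree_mod_less[of d a] d0 unfolding d_def by auto
    then show ?thesis by (simp add: mod_eq_0_iff_dvd)
  qed
  moreover have "d dvd b"
  proof -
    have "b mod d = (- ((b div d) * x)) * a + (1 - (b div d) * y) * b"
      using div_mult_mod_eq[of b d] unfolding d_def by (simp add: algebra_simps)
    then have "b mod d = 0" using least[of "- ((b div d) * x)" "1 - (b div d) * y"]
      degree_mod_less[of d b] d0 unfolding d_def by auto
    then show ?thesis by (simp add: mod_eq_0_iff_dvd)
  qed
  ultimately show ?thesis unfolding d_def by blast
qed

lemma bezout_unit:
  fixes a b :: "'x::field poly"
  assumes "\<And>c. c dvd a \<Longrightarrow> c dvd b \<Longrightarrow> is_unit c"
  shows "\<exists>x y. x * a + y * b = 1"
proof -
  obtain x y where "(x * a + y * b) dvd a" "(x * a + y * b) dvd b" using bezout_poly by blast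
  then have "is_unit (x * a + y * b)" using assms by blast
  then obtain e where "1 = (x * a + y * b) * e" by (elim dvdE)
  then have "(e * x) * a + (e * y) * b = 1" by (simp add: algebra_simps)
  then show ?thesis by blast
qed

lemma coprime_bezout_poly:
  fixes a b :: "'x::field poly"
  assumes "coprime a b"
  shows "\<exists>x y. x * a + y * b = 1"
  using assms by (intro bezout_unit) (auto simp: coprime_def)

lemma irreducible_prime_poly:
  fixes p :: "'x::field poly"
  assumes "irreducible p"
  shows "prime_elem p"
proof -
  have "p dvd a \<or> p dvd b" if "p dvd a * b" for a b
  proof (cases "p dvd a")
    case False
    have "\<exists>x y. x * p + y * a = 1"
    proof (rule bezout_unit)
      fix c assume "c dvd p" "c dvd a"
      then have "p dvd c \<or> is_unit c" using irreducibleD'[OF assms] by blast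
      then show "is_unit c" using False \<open>c dvd a\<close> dvd_trans by blast
    qed
    then obtain x y where xy: "x * p + y * a = 1" by blast
    then have "b = x * b * p + y * (a * b)" by (metis mult.commute mult_1 distrib_right mult.assoc)
    then show ?thesis using that by (metis dvd_add dvd_mult dvd_triv_right)
  qed simp
  then show ?thesis using assms unfolding prime_elem_def irreducible_def by blast
qed

lemma monic_dvd_irred_eq:
  fixes A B :: "'x::field poly"
  assumes "lead_coeff A = 1" "lead_coeff B = 1" "irreducible B" "\<not> is_unit A" "A dvd B"
  shows "A = B"
proof -
  obtain k where k: "B = A * k" using assms(5) by (elim dvdE)
  then have "is_unit k" using irreducibleD[OF assms(3) k] assms(4) by blast
  then obtain c where c: "k = [:c:]" unfolding is_unit_poly_iff by blast
  have "lead_coeff B = lead_coeff A * lead_coeff k" by (simp add: k lead_coeff_mult)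
  then have "c = 1" using assms(1,2) c by simp
  then show ?thesis using k c by simp
qed

lemma monic_irred_bezout:
  fixes A B :: "'x::field poly"
  assumes "lead_coeff A = 1" "lead_coeff B = 1" "irreducible A" "irreducible B" "A \<noteq> B"
  shows "\<exists>x y. x * A + y * B = 1"
proof (rule bezout_unit)
  fix c assume "c dvd A" "c dvd B"
  then have "A dvd c \<or> is_unit c" using irreducibleD'[OF assms(3)] by blast
  moreover have "\<not> A dvd B"
    using monic_dvd_irred_eq[of A B] assms irreducible_not_unit by blast
  ultimately show "is_unit c" using \<open>c dvd B\<close> dvd_trans by blast
qed

lemma irreducible_normalize_poly:
  fixes p :: "'x::field poly"
  assumes "irreducible p"
  shows "irreducible (smult (inverse (lead_coeff p)) p) \<and> lead_coeff (smult (inverse (lead_coeff p)) p) = 1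
         \<and> smult (inverse (lead_coeff p)) p dvd p"
proof -
  have p0: "p \<noteq> 0" using assms by auto
  then have l0: "lead_coeff p \<noteq> 0" by simp
  let ?q = "smult (inverse (lead_coeff p)) p"
  have dvd1: "?q dvd p" using l0 by (simp add: smult_dvd_iff)
  have dvd2: "p dvd ?q" using l0 by (simp add: dvd_smult_iff)
  have "irreducible ?q"
  proof (rule irreducible_mono[OF assms dvd1])
    show "\<not> is_unit ?q"
      using l0 irreducible_not_unit[OF assms] by (simp add: is_unit_smult_iff)
  qed
  moreover have "lead_coeff ?q = 1" using l0 by simp
  ultimately show ?thesis using dvd1 by simp
qed

lemma exists_monic_irred_factor:
  fixes p :: "'x::field poly"
  assumes "p \<noteq> 0" "\<not> is_unit p"
  shows "\<exists>e. irreducible e \<and> lead_coeff e = 1 \<and> e dvd p"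
  using assms
proof (induction "degree p" arbitrary: p rule: less_induct)
  case less
  show ?case
  proof (cases "irreducible p")
    case True
    then show ?thesis using irreducible_normalize_poly[OF True] by blast
  next
    case False
    then obtain a b where ab: "p = a * b" "\<not> is_unit a" "\<not> is_unit b"
      using less.prems unfolding irreducible_def by blast
    then have a0: "a \<noteq> 0" "b \<noteq> 0" using less.prems by auto
    have "degree b \<noteq> 0" using ab a0 is_unit_iff_degree by blast
    then have "degree a < degree p" using ab a0 by (simp add: degree_mult_eq)
    then obtain e where "irreducible e \<and> lead_coeff e = 1 \<and> e dvd a"
      using less.hyps[of a] a0 ab by blast
    then show ?thesis using ab by auto
  qed
qed

lemma prime_dvd_prod_poly:
  fixes e :: "'x::field poly"
  assumes "prime_elem e" "finite S" "e dvd prod f S"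
  shows "\<exists>i\<in>S. e dvd f i"
  using assms(2,3)
proof (induction S rule: finite_induct)
  case empty
  then show ?case using assms(1) prime_elem_not_unit by (metis prod.empty)
next
  case (insert x S)
  then have "e dvd f x * prod f S" by simp
  then show ?case using insert prime_elem_dvd_mult_iff[OF assms(1)] by blast
qed

lemma prod_monic_irred_dvd:
  fixes X :: "'x::field poly"
  assumes "finite E" "\<And>e. e \<in> E \<Longrightarrow> lead_coeff e = 1 \<and> irreducible e \<and> e dvd X"
  shows "prod (\<lambda>e. e) E dvd X"
  using assms
proof (induction E rule: finite_induct)
  case empty
  then show ?case by simp
next
  case (insert x E)
  then have IH: "prod (\<lambda>e. e) E dvd X" by blast
  then obtain Y where Y: "X = prod (\<lambda>e. e) E * Y" by (elim dvdE)
  have x: "lead_coeff x = 1" "irreducible x" "x dvd X" using insert.prems by auto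
  have px: "prime_elem x" using irreducible_prime_poly x(2) by blast
  have "\<not> x dvd prod (\<lambda>e. e) E"
  proof
    assume "x dvd prod (\<lambda>e. e) E"
    then obtain i where i: "i \<in> E" "x dvd i" using prime_dvd_prod_poly[OF px insert(1)] by blast
    have "lead_coeff i = 1 \<and> irreducible i" using insert.prems[of i] i(1) by auto
    then have "x = i" using monic_dvd_irred_eq[of x i] i x irreducible_not_unit by blast
    with i insert(2) show False by simp
  qed
  then have "x dvd Y" using x(3) Y prime_elem_dvd_mult_iff[OF px] by auto
  then show ?case using Y insert(1,2) by (auto simp: mult_dvd_mono)
qed



definition hom_n :: "nat \<Rightarrow> 'a::comm_ring_1 poly \<Rightarrow> 'a poly \<Rightarrow> 'a poly \<Rightarrow> 'a poly" where
  "hom_n n p g f = (\<Sum>i\<le>n. smult (coeff p i) (f ^ i * g ^ (n - i)))"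

lemma homog_eval_hom_n: "homog_eval q g f = hom_n (degree q) q g f"
  unfolding homog_eval_def hom_n_def ..

lemma hom_n_add: "hom_n n (p1 + p2) g f = hom_n n p1 g f + hom_n n p2 g f"
  unfolding hom_n_def by (simp add: smult_add_left sum.distrib)

lemma hom_n_smult: "hom_n n (smult c p) g f = smult c (hom_n n p g f)"
  unfolding hom_n_def by (simp add: smult_sum2 smult_smult)

lemma hom_n_pCons0: "hom_n (Suc n) (pCons 0 p) g f = f * hom_n n p g f"
proof -
  have "hom_n (Suc n) (pCons 0 p) g f =
        smult (coeff (pCons 0 p) 0) (f ^ 0 * g ^ (Suc n - 0)) +
        (\<Sum>i\<le>n. smult (coeff (pCons 0 p) (Suc i)) (f ^ Suc i * g ^ (Suc n - Suc i)))"
    unfolding hom_n_def by (rule sum.atMost_Suc_shift)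
  also have "\<dots> = (\<Sum>i\<le>n. f * smult (coeff p i) (f ^ i * g ^ (n - i)))"
    by (simp add: mult_smult_right mult.assoc)
  also have "\<dots> = f * hom_n n p g f" unfolding hom_n_def by (simp add: sum_distrib_left)
  finally show ?thesis .
qed

lemma hom_n_Suc:
  assumes "degree p \<le> n"
  shows "hom_n (Suc n) p g f = g * hom_n n p g f"
proof -
  have "hom_n (Suc n) p g f = (\<Sum>i\<le>n. smult (coeff p i) (f ^ i * g ^ (Suc n - i))) +
          smult (coeff p (Suc n)) (f ^ Suc n * g ^ (Suc n - Suc n))"
    unfolding hom_n_def by (rule sum.atMost_Suc)
  also have "coeff p (Suc n) = 0" using assms by (intro coeff_eq_0) simp
  also have "(\<Sum>i\<le>n. smult (coeff p i) (f ^ i * g ^ (Suc n - i))) =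
             (\<Sum>i\<le>n. g * smult (coeff p i) (f ^ i * g ^ (n - i)))"
  proof (rule sum.cong)
    fix i assume "i \<in> {..n}"
    then have "Suc n - i = Suc (n - i)" by auto
    then show "smult (coeff p i) (f ^ i * g ^ (Suc n - i)) = g * smult (coeff p i) (f ^ i * g ^ (n - i))"
      by (simp add: mult_smult_right algebra_simps)
  qed simp
  finally show ?thesis unfolding hom_n_def by (simp add: sum_distrib_left)
qed

lemma hom_n_linear:
  assumes "degree p \<le> n"
  shows "hom_n (Suc n) ([:-b, 1:] * p) g f = (f - smult b g) * hom_n n p g f"
proof -
  have eq: "[:-b, 1:] * p = pCons 0 p + smult (-b) p" by simp
  have "hom_n (Suc n) ([:-b, 1:] * p) g f = hom_n (Suc n) (pCons 0 p) g f + hom_n (Suc n) (smult (-b) p) g f"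
    unfolding eq by (rule hom_n_add)
  also have "\<dots> = f * hom_n n p g f + smult (-b) (g * hom_n n p g f)"
    by (simp only: hom_n_pCons0 hom_n_smult hom_n_Suc[OF assms])
  finally show ?thesis by (simp add: algebra_simps)
qed

lemma hom_n_prod:
  "hom_n m (\<Prod>j<m. [:- \<beta> j, 1:]) g f = (\<Prod>j<m. f - smult (\<beta> j) g)"
proof (induction m)
  case 0
  then show ?case by (simp add: hom_n_def)
next
  case (Suc m)
  have deg: "degree (\<Prod>j<m. [:- \<beta> j, 1:]) \<le> m"
    by (rule order.trans[OF degree_prod_sum_le]) simp_all
  have "(\<Prod>j<Suc m. [:- \<beta> j, 1:]) = [:- \<beta> m, 1:] * (\<Prod>j<m. [:- \<beta> j, 1:])"
    by (simp add: mult.commute)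
  then show ?case using hom_n_linear[OF deg, of "\<beta> m" g f] Suc by (simp add: mult.commute)
qed

context FF
begin

lemma map_hom_n: "map_poly h (hom_n n p g f) = hom_n n (map_poly h p) (map_poly h g) (map_poly h f)"
  unfolding hom_n_def by (simp add: mh.hom_sum mh.hom_mult mh.hom_power hh.map_poly_hom_smult hh.coeff_map_poly_hom)

lemma map_homog_eval: "map_poly h (homog_eval q g f) = homog_eval (map_poly h q) (map_poly h g) (map_poly h f)"
  unfolding homog_eval_hom_n by (simp add: map_hom_n)

end


context FF
begin


lemma Fro_comp: "map_poly (fr i) (map_poly (fr j) P) = map_poly (fr (i + j)) P"
  by (subst map_poly_map_poly) (auto simp: fr_zero fr_comp o_def)

lemma Fro_0: "map_poly (fr 0) P = P"
  by (simp add: fr_0 map_poly_idI)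

lemma Fro_h: "map_poly (fr j) (map_poly h P) = map_poly h P"
  by (subst map_poly_map_poly) (auto simp: fr_zero fr_h o_def)

lemma Fro_inj: "map_poly (fr j) P = map_poly (fr j) Q \<Longrightarrow> P = Q"
  by (metis mfr.injectivity)

lemma Fro_lead: "lead_coeff (map_poly (fr j) P) = fr j (lead_coeff P)"
  by simp

lemma Fro_monic: "lead_coeff P = 1 \<Longrightarrow> lead_coeff (map_poly (fr j) P) = 1"
  by (simp add: fr_one)

lemma Fro_dvd: "P dvd R \<Longrightarrow> map_poly (fr j) P dvd map_poly (fr j) R"
  by (simp add: mfr.hom_dvd)

lemma Fro_linear: "map_poly (fr j) [:- a, 1:] = [:- fr j a, 1:]"
  by (simp add: fr_zero fr_one frh.hom_uminus)

lemma orbit: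
  assumes "s > 0" "map_poly (fr s) d = d"
  defines "r \<equiv> LEAST r. r > 0 \<and> map_poly (fr r) d = d"
  shows "r > 0" "map_poly (fr r) d = d" "r \<le> s" "inj_on (\<lambda>j. map_poly (fr j) d) {..<r}"
proof -
  have ex: "s > 0 \<and> map_poly (fr s) d = d" using assms by simp
  show r: "r > 0" "map_poly (fr r) d = d" using LeastI[of "\<lambda>r. r > 0 \<and> map_poly (fr r) d = d", OF ex] by (auto simp: r_def)
  show "r \<le> s" unfolding r_def by (rule Least_le) (rule ex)
  show "inj_on (\<lambda>j. map_poly (fr j) d) {..<r}"
  proof (rule inj_onI)
    fix a b assume a: "a \<in> {..<r}" and b: "b \<in> {..<r}" and eq: "map_poly (fr a) d = map_poly (fr b) d"
    have main: "False" if "a < b" "b < r" "map_poly (fr a) d = map_poly (fr b) d" for a b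
    proof -
      have "map_poly (fr a) (map_poly (fr (b - a)) d) = map_poly (fr a) d" using that by (simp add: Fro_comp)
      then have "map_poly (fr (b - a)) d = d" by (rule Fro_inj)
      then have "r \<le> b - a" unfolding r_def using that by (intro Least_le) simp
      then show False using that by simp
    qed
    show "a = b"
    proof (rule ccontr)
      assume "a \<noteq> b"
      then have "a < b \<or> b < a" by auto
      then show False using main[of a b] main[of b a] a b eq by auto
    qed
  qed
qed

lemma core:
  assumes Dm: "lead_coeff D = 1" and Di: "irreducible D"
    and r0: "r > 0" and rd: "map_poly (fr r) d = d" and inj: "inj_on (\<lambda>j. map_poly (fr j) d) {..<r}"
    and fac: "\<And>j. j < r \<Longrightarrow> lead_coeff (map_poly (fr j) d) = 1 \<and> irreducible (map_poly (fr j) d) \<and> map_poly (fr j) d dvd map_poly h D"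
  shows "map_poly h D = (\<Prod>j<r. map_poly (fr j) d)"
proof -
  define P where "P = (\<Prod>j<r. map_poly (fr j) d)"
  have P_eq: "P = prod (\<lambda>e. e) ((\<lambda>j. map_poly (fr j) d) ` {..<r})"
    unfolding P_def by (simp add: prod.reindex[OF inj])
  have Pdvd: "P dvd map_poly h D"
    unfolding P_eq by (rule prod_monic_irred_dvd) (use fac in auto)
  obtain r' where r': "r = Suc r'" using r0 by (cases r) auto
  have "map_poly (fr 1) P = (\<Prod>j<r. map_poly (fr (Suc j)) d)"
    unfolding P_def by (simp add: mfr.hom_prod Fro_comp)
  also have "\<dots> = P"
  proof -
    have "(\<Prod>j<r. map_poly (fr (Suc j)) d) = (\<Prod>j<r'. map_poly (fr (Suc j)) d) * map_poly (fr r) d"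
      by (simp add: r')
    also have "\<dots> = (\<Prod>j<r'. map_poly (fr (Suc j)) d) * map_poly (fr 0) d" by (simp add: rd Fro_0)
    also have "\<dots> = P" unfolding P_def r' prod.lessThan_Suc_shift by (simp add: mult.commute)
    finally show ?thesis .
  qed
  finally obtain P0 where P0: "P = map_poly h P0" using fixed_poly by blast
  have "P0 dvd D" using Pdvd P0 mh.hom_dvd_iff by simp
  moreover have "lead_coeff P0 = 1"
  proof -
    have "lead_coeff P = 1" unfolding P_def lead_coeff_prod using fac by simp
    then have "h (lead_coeff P0) = h 1" using P0 by simp
    then show ?thesis using hh.injectivity by blast
  qed
  moreover have "\<not> is_unit P0"
  proof
    assume "is_unit P0"
    then have "is_unit P" using P0 by (simp add: mh.hom_dvd[of P0 1, simplified])
    moreover have "map_poly (fr 0) d dvd P" unfolding P_def using r0 by (intro dvd_prodI) auto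
    ultimately have "is_unit (map_poly (fr 0) d)" using dvd_trans by blast
    then show False using fac[OF r0] irreducible_not_unit by blast
  qed
  ultimately have "P0 = D" using monic_dvd_irred_eq Dm Di by blast
  then show ?thesis using P0 P_def by simp
qed

end


context FF
begin

lemma Fro_unit: "is_unit P \<Longrightarrow> is_unit (map_poly (fr j) P)"
  using mfr.hom_dvd[of P 1 j] by (simp add: fr_one)

lemma h_unit: "is_unit P \<Longrightarrow> is_unit (map_poly h P)"
  using mh.hom_dvd[of P 1] by simp

lemma exist_factor:
  assumes "P \<noteq> 0" "irreducible d" "d dvd map_poly h P"
  shows "\<exists>D. lead_coeff D = 1 \<and> irreducible D \<and> D dvd P \<and> d dvd map_poly h D"
  using assms
proof (induction "degree P" arbitrary: P rule: less_induct)
  case less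
  have pd: "prime_elem d" using irreducible_prime_poly less.prems(2) by blast
  show ?case
  proof (cases "is_unit P")
    case True
    then have "is_unit d" using h_unit less.prems(3) dvd_trans by blast
    then show ?thesis using less.prems(2) irreducible_not_unit by blast
  next
    case nu: False
    show ?thesis
    proof (cases "irreducible P")
      case True
      define D where "D = smult (inverse (lead_coeff P)) P"
      have D: "irreducible D" "lead_coeff D = 1" "D dvd P"
        using irreducible_normalize_poly[OF True] unfolding D_def by auto
      have "P dvd D" unfolding D_def using less.prems(1) by (simp add: dvd_smult_iff)
      then have "map_poly h P dvd map_poly h D" by (rule mh.hom_dvd)
      then show ?thesis using D less.prems(3) dvd_trans by blast
    next
      case False
      then obtain a b where ab: "P = a * b" "\<not> is_unit a" "\<not> is_unit b"
        using less.prems(1) nu unfolding irreducible_def by blast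
      then have a0: "a \<noteq> 0" "b \<noteq> 0" using less.prems by auto
      have "degree b \<noteq> 0" using ab a0 is_unit_iff_degree by blast
      then have da: "degree a < degree P" using ab a0 by (simp add: degree_mult_eq)
      have "degree a \<noteq> 0" using ab a0 is_unit_iff_degree by blast
      then have db: "degree b < degree P" using ab a0 by (simp add: degree_mult_eq)
      have "d dvd map_poly h a * map_poly h b" using less.prems(3) ab by (simp add: mh.hom_mult)
      then have "d dvd map_poly h a \<or> d dvd map_poly h b" using prime_elem_dvd_mult_iff[OF pd] by blast
      then show ?thesis
      proof
        assume "d dvd map_poly h a"
        then obtain D where "lead_coeff D = 1 \<and> irreducible D \<and> D dvd a \<and> d dvd map_poly h D"
          using less.hyps[OF da a0(1) less.prems(2)] by blast
        then show ?thesis using ab by auto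
      next
        assume "d dvd map_poly h b"
        then obtain D where "lead_coeff D = 1 \<and> irreducible D \<and> D dvd b \<and> d dvd map_poly h D"
          using less.hyps[OF db a0(2) less.prems(2)] by blast
        then show ?thesis using ab by auto
      qed
    qed
  qed
qed

lemma uniq_factor:
  assumes "lead_coeff D1 = 1" "irreducible D1" "lead_coeff D2 = 1" "irreducible D2"
    "irreducible d" "d dvd map_poly h D1" "d dvd map_poly h D2"
  shows "D1 = D2"
proof (rule ccontr)
  assume "D1 \<noteq> D2"
  then obtain x y where "x * D1 + y * D2 = 1" using monic_irred_bezout assms(1-4) by blast
  then have "map_poly h x * map_poly h D1 + map_poly h y * map_poly h D2 = 1"
    by (metis mh.hom_add mh.hom_mult mh.hom_one)
  then have "d dvd 1" using assms(6,7) by (metis dvd_add dvd_mult)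
  then show False using assms(5) irreducible_not_unit by blast
qed

end

locale FF2 = FF h for h :: "'a::{field,finite} \<Rightarrow> 'b::field" +
  fixes f g q :: "'a poly" and \<alpha> :: 'b
  assumes cop: "coprime f g" and qmon: "lead_coeff q = 1" and qirr: "irreducible q"
    and Q0: "homog_eval q g f \<noteq> 0" and spl: "is_splitting_field h q"
    and root: "poly (map_poly h q) \<alpha> = 0"
begin

definition m :: nat where "m = degree q"

definition u :: "nat \<Rightarrow> 'b poly" where
  "u j = map_poly h f - smult (fr j \<alpha>) (map_poly h g)"

lemma m_pos: "m > 0"
proof -
  have "q \<noteq> 0" "\<not> is_unit q" using qirr irreducible_not_unit by auto
  then show ?thesis unfolding m_def using is_unit_iff_degree by auto
qed

lemma q_split:
  "map_poly h q = (\<Prod>j<m. [:- fr j \<alpha>, 1:])" "fr m \<alpha> = \<alpha>" "inj_on (\<lambda>j. fr j \<alpha>) {..<m}"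
proof -
  define d where "d = [:- \<alpha>, 1:]"
  have Fd: "map_poly (fr j) d = [:- fr j \<alpha>, 1:]" for j unfolding d_def by (rule Fro_linear)
  have qh0: "map_poly h q \<noteq> 0" using qirr by auto
  have rootj: "poly (map_poly h q) (fr j \<alpha>) = 0" for j
  proof -
    have "poly (map_poly h q) (fr j \<alpha>) = poly (map_poly (fr j) (map_poly h q)) (fr j \<alpha>)"
      by (simp only: Fro_h)
    also have "\<dots> = fr j (poly (map_poly h q) \<alpha>)" by (rule frh.poly_map_poly)
    finally show ?thesis using root fr_zero by simp
  qed
  have dvdj: "map_poly (fr j) d dvd map_poly h q" for j
    unfolding Fd using rootj[of j] by (simp add: dvd_iff_poly_eq_0)
  have "\<not> inj (\<lambda>j. fr j \<alpha>)"
  proof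
    assume "inj (\<lambda>j. fr j \<alpha>)"
    moreover have "finite (range (\<lambda>j. fr j \<alpha>))"
      by (rule finite_subset[OF _ poly_roots_finite[OF qh0]]) (use rootj in auto)
    ultimately have "finite (UNIV :: nat set)" using finite_imageD by blast
    then show False by simp
  qed
  then obtain i j where ij: "i \<noteq> j" "fr i \<alpha> = fr j \<alpha>" unfolding inj_def by blast
  have "\<exists>s>0. fr s \<alpha> = \<alpha>"
  proof -
    have *: "\<exists>s>0. fr s \<alpha> = \<alpha>" if "i < j" "fr i \<alpha> = fr j \<alpha>" for i j
    proof -
      have "fr i (fr (j - i) \<alpha>) = fr i \<alpha>" using that by (simp add: fr_comp)
      then have "fr (j - i) \<alpha> = \<alpha>" by (rule fr_inj)
      then show ?thesis using that by (intro exI[of _ "j - i"]) auto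
    qed
    show ?thesis
    proof (cases "i < j")
      case True then show ?thesis using * ij by blast
    next
      case False then have "j < i" using ij by auto
      then show ?thesis using *[of j i] ij by auto
    qed
  qed
  then obtain s where s: "s > 0" "map_poly (fr s) d = d" using Fd unfolding d_def by auto
  define r where "r = (LEAST r. r > 0 \<and> map_poly (fr r) d = d)"
  have r: "r > 0" "map_poly (fr r) d = d" "inj_on (\<lambda>j. map_poly (fr j) d) {..<r}"
    using orbit[OF s] unfolding r_def by auto
  have fac: "lead_coeff (map_poly (fr j) d) = 1 \<and> irreducible (map_poly (fr j) d) \<and> map_poly (fr j) d dvd map_poly h q" for j
    using dvdj[of j] unfolding Fd by (auto intro: irreducible_linear_field_poly)
  have qeq: "map_poly h q = (\<Prod>j<r. map_poly (fr j) d)"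
    by (rule core[OF qmon qirr r]) (use fac in auto)
  have "degree (map_poly h q) = r" unfolding qeq Fd by (subst degree_prod_sum_eq) auto
  then have rm: "r = m" unfolding m_def by simp
  show "map_poly h q = (\<Prod>j<m. [:- fr j \<alpha>, 1:])" using qeq rm Fd by simp
  show "fr m \<alpha> = \<alpha>" using r(2) rm unfolding Fd d_def by (simp add: frh.hom_uminus)
  show "inj_on (\<lambda>j. fr j \<alpha>) {..<m}"
    using r(3) rm unfolding Fd by (auto simp: inj_on_def)
qed

lemma fr_m_id: "fr m x = x"
proof -
  define K where "K = {x. fr m x = x}"
  have "is_subfield K"
    unfolding is_subfield_def K_def
    by (auto simp: fr_zero fr_one fr_add fr_mult frh.hom_uminus frh.hom_inverse)
  moreover have "range h \<subseteq> K" unfolding K_def using fr_h by auto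
  moreover have "{x. poly (map_poly h q) x = 0} \<subseteq> K"
  proof
    fix x assume "x \<in> {x. poly (map_poly h q) x = 0}"
    then have "(\<Prod>j<m. x - fr j \<alpha>) = 0" using q_split(1) by (simp add: poly_prod)
    then obtain j where "x = fr j \<alpha>" by auto
    moreover have "fr m (fr j \<alpha>) = fr j (fr m \<alpha>)" by (simp add: fr_comp add.commute)
    ultimately show "x \<in> K" unfolding K_def using q_split(2) by simp
  qed
  ultimately have "K = UNIV" using spl unfolding is_splitting_field_def by blast
  then show ?thesis unfolding K_def by auto
qed

lemma fr_mn: "fr (m * n) x = x"
proof (induction n)
  case 0 then show ?case by (simp add: fr_0)
next
  case (Suc n)
  have "fr (m * Suc n) x = fr m (fr (m * n) x)" by (simp add: fr_comp)
  then show ?case using Suc fr_m_id by simp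
qed

lemma Fro_mn: "map_poly (fr (m * n)) P = P"
  by (rule map_poly_idI) (simp add: fr_mn)

lemma Fro_inv: "map_poly (fr ((m - 1) * j)) (map_poly (fr j) P) = P"
                "map_poly (fr j) (map_poly (fr ((m - 1) * j)) P) = P"
proof -
  have "(m - 1) * j + j = m * j" using m_pos by (cases m) auto
  then show "map_poly (fr ((m - 1) * j)) (map_poly (fr j) P) = P"
            "map_poly (fr j) (map_poly (fr ((m - 1) * j)) P) = P"
    by (simp_all add: Fro_comp Fro_mn add.commute)
qed

lemma Fro_irred:
  assumes "irreducible d"
  shows "irreducible (map_poly (fr j) d)"
proof (rule irreducibleI)
  let ?k = "(m - 1) * j"
  show "map_poly (fr j) d \<noteq> 0" using assms by (auto simp: fr_zero)
  show "\<not> is_unit (map_poly (fr j) d)"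
  proof
    assume "is_unit (map_poly (fr j) d)"
    then have "is_unit (map_poly (fr ?k) (map_poly (fr j) d))" by (rule Fro_unit)
    then show False using assms irreducible_not_unit Fro_inv(1) by metis
  qed
  fix a b assume ab: "map_poly (fr j) d = a * b"
  then have "d = map_poly (fr ?k) a * map_poly (fr ?k) b"
    by (metis Fro_inv(1) mfr.hom_mult)
  then have "is_unit (map_poly (fr ?k) a) \<or> is_unit (map_poly (fr ?k) b)"
    using irreducibleD[OF assms] by blast
  then show "is_unit a \<or> is_unit b" using Fro_unit Fro_inv(2) by metis
qed

lemma Fro_u: "map_poly (fr j) (u i) = u (j + i)"
  unfolding u_def by (simp add: mfr.hom_minus frh.map_poly_hom_smult Fro_h fr_comp)

lemma u_mn: "u (m * n) = u 0"
  unfolding u_def by (simp add: fr_mn fr_0)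

lemma hQ: "map_poly h (homog_eval q g f) = (\<Prod>j<m. u j)"
proof -
  have "map_poly h (homog_eval q g f) = hom_n m (map_poly h q) (map_poly h g) (map_poly h f)"
    unfolding map_homog_eval by (simp add: homog_eval_hom_n m_def)
  also have "\<dots> = (\<Prod>j<m. u j)" unfolding q_split(1) hom_n_prod u_def ..
  finally show ?thesis .
qed

lemma u_coprime:
  assumes "i < m" "j < m" "i \<noteq> j" "irreducible d" "d dvd u i" "d dvd u j"
  shows False
proof -
  obtain x y where "x * f + y * g = 1" using coprime_bezout_poly[OF cop] by blast
  then have xy: "map_poly h x * map_poly h f + map_poly h y * map_poly h g = 1"
    by (metis mh.hom_add mh.hom_mult mh.hom_one)
  have "u i - u j = smult (fr j \<alpha> - fr i \<alpha>) (map_poly h g)"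
    unfolding u_def by (simp add: algebra_simps smult_diff_left)
  moreover have "fr j \<alpha> - fr i \<alpha> \<noteq> 0" using q_split(3) assms(1-3) by (auto simp: inj_on_def)
  moreover have "d dvd u i - u j" using assms(5,6) by (rule dvd_diff)
  ultimately have dg: "d dvd map_poly h g" by (metis dvd_smult_cancel)
  have "map_poly h f = u i + smult (fr i \<alpha>) (map_poly h g)" unfolding u_def by simp
  then have df: "d dvd map_poly h f" using dg assms(5) by (metis dvd_add dvd_smult)
  have "d dvd 1" using xy df dg by (metis dvd_add dvd_mult)
  then show False using assms(4) irreducible_not_unit by blast
qed

end


context FF2
begin

definition S0 :: "'b poly set" where
  "S0 = {d. lead_coeff d = 1 \<and> irreducible d \<and> d dvd u 0}"

definition T :: "'a poly set" where
  "T = {D. lead_coeff D = 1 \<and> irreducible D \<and> D dvd homog_eval q g f}"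

definition Psi :: "'b poly \<Rightarrow> 'a poly" where
  "Psi d = (THE D. lead_coeff D = 1 \<and> irreducible D \<and> D dvd homog_eval q g f \<and> d dvd map_poly h D)"

lemma u_dvd_hQ: "j < m \<Longrightarrow> u j dvd map_poly h (homog_eval q g f)"
  unfolding hQ by (intro dvd_prodI) auto

lemma Psi_prop:
  assumes "d \<in> S0"
  shows "lead_coeff (Psi d) = 1 \<and> irreducible (Psi d) \<and> Psi d dvd homog_eval q g f \<and> d dvd map_poly h (Psi d)"
proof -
  have d: "lead_coeff d = 1" "irreducible d" "d dvd u 0" using assms unfolding S0_def by auto
  have "d dvd map_poly h (homog_eval q g f)" using d(3) u_dvd_hQ[OF m_pos] dvd_trans by blast
  then obtain D where D: "lead_coeff D = 1 \<and> irreducible D \<and> D dvd homog_eval q g f \<and> d dvd map_poly h D"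
    using exist_factor[OF Q0 d(2)] by blast
  have "\<exists>!D. lead_coeff D = 1 \<and> irreducible D \<and> D dvd homog_eval q g f \<and> d dvd map_poly h D"
    using D uniq_factor d(2) by blast
  then show ?thesis unfolding Psi_def by (rule theI')
qed

lemma Psi_eq:
  assumes "d \<in> S0" "lead_coeff D = 1" "irreducible D" "d dvd map_poly h D"
  shows "Psi d = D"
  using Psi_prop[OF assms(1)] assms uniq_factor unfolding S0_def by blast

lemma Psi_inj: "inj_on Psi S0"
proof (rule inj_onI)
  fix d1 d2 assume d1: "d1 \<in> S0" and d2: "d2 \<in> S0" and eq: "Psi d1 = Psi d2"
  define D where "D = Psi d1"
  have D: "lead_coeff D = 1" "irreducible D" "d1 dvd map_poly h D" "d2 dvd map_poly h D"
    using Psi_prop[OF d1] Psi_prop[OF d2] eq unfolding D_def by auto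
  have d1p: "lead_coeff d1 = 1" "irreducible d1" "d1 dvd u 0" using d1 unfolding S0_def by auto
  have d2p: "lead_coeff d2 = 1" "irreducible d2" "d2 dvd u 0" using d2 unfolding S0_def by auto
  have s: "map_poly (fr m) d1 = d1" using Fro_mn[of 1 d1] by simp
  define r where "r = (LEAST r. r > 0 \<and> map_poly (fr r) d1 = d1)"
  have r: "r > 0" "map_poly (fr r) d1 = d1" "r \<le> m" "inj_on (\<lambda>j. map_poly (fr j) d1) {..<r}"
    using orbit[OF m_pos s] unfolding r_def by auto
  have fac: "lead_coeff (map_poly (fr j) d1) = 1 \<and> irreducible (map_poly (fr j) d1)
           \<and> map_poly (fr j) d1 dvd map_poly h D" for j
    using Fro_monic[OF d1p(1)] Fro_irred[OF d1p(2)] Fro_dvd[OF D(3), of j] by (simp add: Fro_h)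
  have hD: "map_poly h D = (\<Prod>j<r. map_poly (fr j) d1)"
    by (rule core[OF D(1,2) r(1,2,4)]) (use fac in auto)
  have "prime_elem d2" using irreducible_prime_poly d2p(2) by blast
  then obtain j where j: "j < r" "d2 dvd map_poly (fr j) d1"
    using prime_dvd_prod_poly[of d2 "{..<r}"] D(4) hD by auto
  have d2eq: "d2 = map_poly (fr j) d1"
    using monic_dvd_irred_eq[OF d2p(1) _ _ _ j(2)] fac[of j] d2p(2) irreducible_not_unit by blast
  show "d1 = d2"
  proof (cases "j = 0")
    case True then show ?thesis using d2eq by (simp add: Fro_0)
  next
    case False
    have "d2 dvd u j" using Fro_dvd[OF d1p(3), of j] d2eq by (simp add: Fro_u)
    then show ?thesis using u_coprime[of 0 j d2] False j r(3) d2p m_pos by auto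
  qed
qed

lemma Psi_surj: "Psi ` S0 = T"
proof
  show "Psi ` S0 \<subseteq> T" using Psi_prop unfolding T_def by auto
  show "T \<subseteq> Psi ` S0"
  proof
    fix D assume "D \<in> T"
    then have D: "lead_coeff D = 1" "irreducible D" "D dvd homog_eval q g f" unfolding T_def by auto
    have "map_poly h D \<noteq> 0" using D(2) by auto
    moreover have "\<not> is_unit (map_poly h D)"
    proof -
      have "D \<noteq> 0" "\<not> is_unit D" using D(2) irreducible_not_unit by auto
      then have "degree D \<noteq> 0" using is_unit_iff_degree by blast
      then show ?thesis using is_unit_iff_degree[of "map_poly h D"] by simp
    qed
    ultimately obtain e where e: "irreducible e" "lead_coeff e = 1" "e dvd map_poly h D"
      using exists_monic_irred_factor by blast
    have "e dvd (\<Prod>j<m. u j)"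
      using e(3) mh.hom_dvd[OF D(3)] hQ dvd_trans by metis
    moreover have "prime_elem e" using irreducible_prime_poly e(1) by blast
    ultimately obtain j where j: "j < m" "e dvd u j" using prime_dvd_prod_poly[of e "{..<m}"] by auto
    define k where "k = (m - 1) * j"
    define d where "d = map_poly (fr k) e"
    have kj: "k + j = m * j" unfolding k_def using m_pos by (cases m) auto
    have "d dvd u 0" unfolding d_def using Fro_dvd[OF j(2), of k] by (simp add: Fro_u kj u_mn)
    moreover have "lead_coeff d = 1" "irreducible d" unfolding d_def using Fro_monic[OF e(2)] Fro_irred[OF e(1)] by auto
    ultimately have dS: "d \<in> S0" unfolding S0_def by auto
    have "d dvd map_poly h D" unfolding d_def using Fro_dvd[OF e(3), of k] by (simp add: Fro_h)
    then have "Psi d = D" using Psi_eq[OF dS D(1,2)] by simp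
    then show "D \<in> Psi ` S0" using dS by blast
  qed
qed

lemma card_eq: "card T = card S0"
  using bij_betw_same_card[of Psi S0 T] Psi_inj Psi_surj unfolding bij_betw_def by auto

end

theorem mainTheorem3:
  fixes f g q :: "'a::{field,finite} poly"
    and h :: "'a \<Rightarrow> 'b::field"
    and \<alpha> :: 'b
  assumes "coprime f g"
    and "lead_coeff q = 1" and "irreducible q"
    and "homog_eval q g f \<noteq> 0"
    and "is_splitting_field h q"
    and "poly (map_poly h q) \<alpha> = 0"
  shows "num_monic_irred_factors (homog_eval q g f)
       = num_monic_irred_factors (map_poly h f - smult \<alpha> (map_poly h g))"
proof -
  have hf: "is_field_hom h" using assms(5) unfolding is_splitting_field_def by blast
  interpret FF2 h f g q \<alpha>
    by (rule FF2.intro, unfold_locales) (use hf assms in \<open>auto simp: FF_def\<close>)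
  have "u 0 = map_poly h f - smult \<alpha> (map_poly h g)" unfolding u_def by (simp add: fr_0)
  then show ?thesis using card_eq unfolding num_monic_irred_factors_def S0_def T_def by simp
qed


end
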